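(* Let $d:\mathbb{Z}\to\mathbb{C}$ be bounded and let $J$ be the operator on $\ell^2(\mathbb{Z})$ given by $(Ju)(n)=u(n-1)+d(n)u(n)+u(n+1)$. If $J$ has a boundary eigenvalue with imaginary part $b$, then (i) for every $n\in\mathbb{Z}$, $\Im(d(n))=b$ or $\Im(d(n+1))=b$; (ii) every boundary eigenvalue of $J$ has imaginary part $b$.
   Context: The numerical range is $\operatorname{Num}(J)=\{\langle Ju,u\rangle:\|u\|=1\}$, and a boundary eigenvalue of $J$ is an eigenvalue of $J$ lying in the topological boundary of $\operatorname{Num}(J)$. *)

theory Defs
  imports "HOL-Analysis.Analysis"
begin

definition l2 :: "(int \<Rightarrow> complex) set" where
  "l2 = {u. (\<lambda>n. (cmod (u n))^2) summable_on UNIV}"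

definition jacobi :: "(int \<Rightarrow> complex) \<Rightarrow> (int \<Rightarrow> complex) \<Rightarrow> int \<Rightarrow> complex" where
  "jacobi d u n = u (n - 1) + d n * u n + u (n + 1)"

definition numrange :: "(int \<Rightarrow> complex) \<Rightarrow> complex set" where
  "numrange d = {infsum (\<lambda>n. jacobi d u n * cnj (u n)) UNIV | u.
      u \<in> l2 \<and> infsum (\<lambda>n. (cmod (u n))^2) UNIV = 1}"

definition is_eigenvalue :: "(int \<Rightarrow> complex) \<Rightarrow> complex \<Rightarrow> bool" where
  "is_eigenvalue d z \<longleftrightarrow> (\<exists>u \<in> l2. u \<noteq> (\<lambda>_. 0) \<and> jacobi d u = (\<lambda>n. z * u n))"

definition boundary_eigenvalue :: "(int \<Rightarrow> complex) \<Rightarrow> complex \<Rightarrow> bool" where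
  "boundary_eigenvalue d z \<longleftrightarrow> is_eigenvalue d z \<and> z \<in> frontier (numrange d)"

end

theory Submission
  imports Defs
begin

definition ip :: "(int \<Rightarrow> complex) \<Rightarrow> (int \<Rightarrow> complex) \<Rightarrow> complex" where
  "ip f g = infsum (\<lambda>n. f n * cnj (g n)) UNIV"
definition nrm :: "(int \<Rightarrow> complex) \<Rightarrow> real" where
  "nrm f = infsum (\<lambda>n. (cmod (f n))^2) UNIV"
definition ee :: "int \<Rightarrow> int \<Rightarrow> complex" where
  "ee m = (\<lambda>n. if n = m then 1 else 0)"

lemma l2_add: assumes "f \<in> l2" "g \<in> l2" shows "(\<lambda>n. f n + g n) \<in> l2"
proof -
  have s: "(\<lambda>n. 2 * (cmod (f n))^2 + 2 * (cmod (g n))^2) summable_on UNIV"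
    using assms unfolding l2_def
    by (intro summable_on_add summable_on_cmult_right) auto
  have "(cmod (f n + g n))^2 \<le> 2 * (cmod (f n))^2 + 2 * (cmod (g n))^2" for n
  proof -
    have "cmod (f n + g n) \<le> cmod (f n) + cmod (g n)" by (rule norm_triangle_ineq)
    hence "(cmod (f n + g n))^2 \<le> (cmod (f n) + cmod (g n))^2"
      by (simp add: power_mono)
    also have "\<dots> \<le> 2 * (cmod (f n))^2 + 2 * (cmod (g n))^2"
      using power2_sum[of "cmod (f n)" "cmod (g n)"] power2_diff[of "cmod (f n)" "cmod (g n)"]
        zero_le_power2[of "cmod (f n) - cmod (g n)"] by linarith
    finally show ?thesis .
  qed
  thus ?thesis unfolding l2_def using summable_on_comparison_test[OF s] by auto
qed

lemma l2_scale: assumes "f \<in> l2" shows "(\<lambda>n. c * f n) \<in> l2"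
  using assms unfolding l2_def by (simp add: norm_mult power_mult_distrib summable_on_cmult_right)

lemma l2_bmult: assumes "f \<in> l2" "\<And>n. cmod (d n) \<le> B" shows "(\<lambda>n. d n * f n) \<in> l2"
proof -
  have s: "(\<lambda>n. B^2 * (cmod (f n))^2) summable_on UNIV"
    using assms unfolding l2_def by (intro summable_on_cmult_right) auto
  have "(cmod (d n * f n))^2 \<le> B^2 * (cmod (f n))^2" for n
    by (simp add: norm_mult power_mult_distrib mult_right_mono power_mono assms(2))
  thus ?thesis unfolding l2_def using summable_on_comparison_test[OF s] by auto
qed

lemma l2_shift: assumes "f \<in> l2" shows "(\<lambda>n. f (n + k)) \<in> l2"
proof -
  have r: "range (\<lambda>n. n + k) = UNIV"
    by (rule surjI[where f="\<lambda>n. n - k"]) simp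
  have "(\<lambda>n. (cmod (f n))^2) summable_on ((\<lambda>n. n + k) ` UNIV)"
    using assms unfolding l2_def r by simp
  hence "((\<lambda>n. (cmod (f n))^2) o (\<lambda>n. n + k)) summable_on UNIV"
    by (subst (asm) summable_on_reindex) (auto simp: inj_on_def)
  thus ?thesis unfolding l2_def by (simp add: o_def)
qed

lemma l2_ee: "ee m \<in> l2"
proof -
  have "(\<lambda>n. (cmod (ee m n))^2) summable_on {m}" by simp
  thus ?thesis unfolding l2_def mem_Collect_eq
    by (subst (asm) summable_on_cong_neutral[where T=UNIV and g="\<lambda>n. (cmod (ee m n))^2"]) (auto simp: ee_def)
qed

lemma l2_prod: assumes "f \<in> l2" "g \<in> l2" shows "(\<lambda>n. f n * cnj (g n)) summable_on UNIV"
proof -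
  have s: "(\<lambda>n. (cmod (f n))^2 + (cmod (g n))^2) summable_on UNIV"
    using assms unfolding l2_def by (intro summable_on_add) auto
  have "norm (f n * cnj (g n)) \<le> (cmod (f n))^2 + (cmod (g n))^2" for n
  proof -
    have "norm (f n * cnj (g n)) = cmod (f n) * cmod (g n)" by (simp add: norm_mult)
    also have "\<dots> \<le> (cmod (f n))^2 + (cmod (g n))^2"
      using power2_diff[of "cmod (f n)" "cmod (g n)"]
        zero_le_power2[of "cmod (f n) - cmod (g n)"]
        mult_nonneg_nonneg[OF norm_ge_zero[of "f n"] norm_ge_zero[of "g n"]] by linarith
    finally show ?thesis .
  qed
  hence "(\<lambda>n. norm (f n * cnj (g n))) summable_on UNIV"
    using summable_on_comparison_test[OF s] by auto
  thus ?thesis using summable_on_iff_abs_summable_on_complex by blast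
qed



lemma ip_add1: assumes "f \<in> l2" "g \<in> l2" "h \<in> l2"
  shows "ip (\<lambda>n. f n + g n) h = ip f h + ip g h"
  unfolding ip_def using l2_prod[OF assms(1,3)] l2_prod[OF assms(2,3)]
  by (simp add: distrib_right infsum_add)

lemma ip_scale1: "ip (\<lambda>n. c * f n) h = c * ip f h"
  unfolding ip_def by (simp add: mult.assoc infsum_cmult_right')

lemma ip_conj: "ip g f = cnj (ip f g)"
  unfolding ip_def infsum_cnj[symmetric] by (simp add: mult.commute)

lemma ip_add2: assumes "f \<in> l2" "g \<in> l2" "h \<in> l2"
  shows "ip h (\<lambda>n. f n + g n) = ip h f + ip h g"
  using ip_add1[OF assms] by (metis ip_conj complex_cnj_add)

lemma ip_scale2: "ip h (\<lambda>n. c * f n) = cnj c * ip h f"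
  by (metis ip_conj ip_scale1 complex_cnj_mult complex_cnj_cnj)

lemma ip_self: assumes "f \<in> l2" shows "ip f f = of_real (nrm f)"
proof -
  have "((\<lambda>n. (cmod (f n))^2) has_sum nrm f) UNIV"
    using assms unfolding l2_def nrm_def by auto
  from has_sum_of_real[OF this, where 'a=complex] have "((\<lambda>n. f n * cnj (f n)) has_sum (of_real (nrm f))) UNIV"
    unfolding complex_norm_square .
  thus ?thesis unfolding ip_def by (rule infsumI)
qed

lemma nrm_nonneg: "nrm f \<ge> 0"
  unfolding nrm_def by (rule infsum_nonneg) simp

lemma ip_ee: "ip (ee k) u = cnj (u k)"
proof -
  have "ip (ee k) u = infsum (\<lambda>n. ee k n * cnj (u n)) {k}"
    unfolding ip_def by (rule infsum_cong_neutral) (auto simp: ee_def)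
  thus ?thesis by (simp add: ee_def)
qed

lemma jacobi_l2: assumes "bounded (range d)" "u \<in> l2" shows "jacobi d u \<in> l2"
proof -
  obtain B where B: "\<And>n. cmod (d n) \<le> B" using assms(1) by (meson bounded_iff rangeI)
  have "(\<lambda>n. u (n + -1) + d n * u n) \<in> l2"
    using l2_add[OF l2_shift[OF assms(2)] l2_bmult[OF assms(2) B]] .
  hence "(\<lambda>n. (u (n + -1) + d n * u n) + u (n + 1)) \<in> l2"
    using l2_add l2_shift[OF assms(2)] by blast
  thus ?thesis unfolding jacobi_def by (simp add: fun_eq_iff)
qed

lemma jacobi_lin: "jacobi d (\<lambda>n. f n + c * g n) = (\<lambda>n. jacobi d f n + c * jacobi d g n)"
  unfolding jacobi_def by (simp add: fun_eq_iff algebra_simps)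

lemma jacobi_scale: "jacobi d (\<lambda>n. c * g n) = (\<lambda>n. c * jacobi d g n)"
  unfolding jacobi_def by (simp add: fun_eq_iff algebra_simps)

lemma jacobi_ee: "jacobi d (ee m) = (\<lambda>n. ee (m+1) n + d m * ee m n + ee (m - 1) n)"
  unfolding jacobi_def ee_def by (auto simp: fun_eq_iff)

lemma in_numrange:
  assumes "v \<in> l2" "nrm v > 0"
  shows "ip (jacobi d v) v / of_real (nrm v) \<in> numrange d"
proof -
  define c where "c = 1 / sqrt (nrm v)"
  define u where "u = (\<lambda>n. of_real c * v n)"
  have u: "u \<in> l2" unfolding u_def by (rule l2_scale[OF assms(1)])
  have cc: "c * c = 1 / nrm v" unfolding c_def using assms(2)
    by (simp add: real_sqrt_mult[symmetric])
  have "ip u u = of_real c * cnj (of_real c) * ip v v"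
    unfolding u_def ip_scale1 ip_scale2 by simp
  also have "\<dots> = of_real (c * c * nrm v)" using ip_self[OF assms(1)] by simp
  also have "\<dots> = 1" using cc assms(2) by simp
  finally have "of_real (nrm u) = (1::complex)" using ip_self[OF u] by simp
  hence n1: "nrm u = 1" by (metis of_real_eq_1_iff)
  have "ip (jacobi d u) u = of_real c * cnj (of_real c) * ip (jacobi d v) v"
    unfolding u_def jacobi_scale ip_scale1 ip_scale2 by simp
  also have "\<dots> = ip (jacobi d v) v / of_real (nrm v)"
    using cc by (simp add: of_real_mult[symmetric] del: of_real_mult)
  finally have "ip (jacobi d v) v / of_real (nrm v) = infsum (\<lambda>n. jacobi d u n * cnj (u n)) UNIV"
    unfolding ip_def by simp
  thus ?thesis unfolding numrange_def using u n1 unfolding nrm_def by blast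
qed


lemma fixed_rho:
  fixes D E :: complex and K :: real
  assumes "cmod E \<le> K" "cmod D * (1 + 2*K)^2 < 1"
  shows "\<exists>\<rho>\<ge>0. \<rho> = (cmod (D + of_real \<rho> * E))^2"
proof (cases "D = 0")
  case True thus ?thesis by (intro exI[of _ 0]) simp
next
  case False
  define h where "h \<rho> = (cmod (D + of_real \<rho> * E))^2 - \<rho>" for \<rho>
  have K0: "K \<ge> 0" using assms(1) norm_ge_zero order_trans by blast
  have Dp: "cmod D > 0" using False by simp
  have "h (2 * cmod D) \<le> 0"
  proof -
    have "cmod (D + of_real (2 * cmod D) * E) \<le> cmod D + cmod (of_real (2 * cmod D) * E)"
      by (rule norm_triangle_ineq)
    also have "cmod (of_real (2 * cmod D) * E) = 2 * cmod D * cmod E"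
      by (simp add: norm_mult)
    finally have "cmod (D + of_real (2 * cmod D) * E) \<le> cmod D + 2 * cmod D * cmod E" .
    also have "\<dots> \<le> cmod D * (1 + 2 * K)"
      using assms(1) Dp by (simp add: algebra_simps)
    finally have 1: "cmod (D + of_real (2 * cmod D) * E) \<le> cmod D * (1 + 2 * K)" .
    hence "(cmod (D + of_real (2 * cmod D) * E))^2 \<le> (cmod D * (1 + 2 * K))^2"
      by (intro power_mono) auto
    also have "\<dots> = cmod D * (cmod D * (1 + 2*K)^2)" by (simp add: power2_eq_square)
    also have "\<dots> \<le> cmod D * 1" using assms(2) Dp by (intro mult_left_mono) auto
    finally have X: "(cmod (D + of_real (2 * cmod D) * E))^2 \<le> cmod D * 1" .
    show ?thesis unfolding h_def using X Dp by linarith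
  qed
  moreover have "0 \<le> h 0" unfolding h_def by simp
  moreover have "continuous_on {0 .. 2 * cmod D} h" unfolding h_def
    by (intro continuous_intros)
  ultimately obtain x where "0 \<le> x" "x \<le> 2 * cmod D" "h x = 0"
    using IVT2'[of h "2 * cmod D" 0 0] Dp by auto
  thus ?thesis unfolding h_def by auto
qed

lemma alg_open:
  fixes z a C :: complex and N P :: real
  assumes "N > 0" "P \<ge> 0" "a \<noteq> 0"
  shows "\<exists>r>0. \<forall>\<zeta>. cmod (\<zeta> - z) < r \<longrightarrow> (\<exists>s. \<zeta> * of_real (N + (cmod s)^2 * P)
           = z * of_real N + s * a + of_real ((cmod s)^2) * C)"
proof -
  define K where "K = ((cmod z + 1) * P + cmod C) / (cmod a)^2"
  have K0: "K \<ge> 0" unfolding K_def using assms by simp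
  define r where "r = min 1 (1 / (N * (1 + 2*K)^2))"
  have pos: "N * (1 + 2*K)^2 > 0" using assms K0 by simp
  have "r > 0" unfolding r_def using pos by simp
  moreover have "\<exists>s. \<zeta> * of_real (N + (cmod s)^2 * P)
           = z * of_real N + s * a + of_real ((cmod s)^2) * C" if \<zeta>: "cmod (\<zeta> - z) < r" for \<zeta>
  proof -
    define D where "D = (\<zeta> - z) * of_real N"
    define E where "E = (\<zeta> * of_real P - C) / of_real ((cmod a)^2)"
    have "cmod (\<zeta> - z) < 1" using \<zeta> unfolding r_def by simp
    moreover have "cmod \<zeta> - cmod z \<le> cmod (\<zeta> - z)" by (rule norm_triangle_ineq2)
    ultimately have "cmod \<zeta> \<le> cmod z + 1" by linarith
    hence 1: "cmod \<zeta> * P \<le> (cmod z + 1) * P" using assms(2) by (rule mult_right_mono)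
    have "cmod (\<zeta> * of_real P - C) \<le> cmod (\<zeta> * of_real P) + cmod C" by (rule norm_triangle_ineq4)
    also have "cmod (\<zeta> * of_real P) = cmod \<zeta> * P" using assms(2) by (simp add: norm_mult)
    finally have "cmod (\<zeta> * of_real P - C) \<le> (cmod z + 1) * P + cmod C" using 1 by linarith
    hence E: "cmod E \<le> K" unfolding E_def K_def using assms(3)
      by (simp add: norm_divide norm_power divide_right_mono)
    have "cmod D = cmod (\<zeta> - z) * N" unfolding D_def using assms(1) by (simp add: norm_mult)
    also have "\<dots> < (1 / (N * (1 + 2*K)^2)) * N"
      using \<zeta> assms(1) unfolding r_def by (intro mult_strict_right_mono) auto
    finally have "cmod D * (1 + 2*K)^2 < (1 / (N * (1 + 2*K)^2)) * N * (1 + 2*K)^2"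
      using pos assms(1) by (intro mult_strict_right_mono) auto
    also have "\<dots> = 1" using pos assms(1) K0 by (simp add: field_simps)
    finally obtain \<rho> where \<rho>: "\<rho> \<ge> 0" "\<rho> = (cmod (D + of_real \<rho> * E))^2"
      using fixed_rho[OF E] by blast
    define t where "t = D + of_real \<rho> * E"
    define s where "s = t / a"
    have ns: "(cmod s)^2 = \<rho> / (cmod a)^2" unfolding s_def using \<rho>(2) t_def
      by (simp add: norm_divide power_divide)
    have a2: "(of_real ((cmod a)^2) :: complex) \<noteq> 0" using assms(3) by simp
    define A where "A = (of_real ((cmod a)^2) :: complex)"
    have nsc: "(of_real ((cmod s)^2) :: complex) = of_real \<rho> / A" unfolding ns A_def by simp
    have sa: "s * a = t" unfolding s_def using assms(3) by simp
    have "\<zeta> * of_real (N + (cmod s)^2 * P) = \<zeta> * of_real N + \<zeta> * of_real P * of_real ((cmod s)^2)"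
      by (simp add: algebra_simps)
    also have "\<dots> = z * of_real N + s * a + of_real ((cmod s)^2) * C"
      unfolding sa nsc t_def D_def E_def A_def[symmetric] using a2 unfolding A_def[symmetric]
      by (simp add: field_simps)
    finally have "\<zeta> * of_real (N + (cmod s)^2 * P) = z * of_real N + s * a + of_real ((cmod s)^2) * C" .
    thus ?thesis by blast
  qed
  ultimately show ?thesis by blast
qed


lemma ip_expand:
  assumes "f \<in> l2" "g \<in> l2" "h \<in> l2" "k \<in> l2"
  shows "ip (\<lambda>n. f n + s * g n) (\<lambda>n. h n + s * k n)
       = ip f h + cnj s * ip f k + s * ip g h + s * cnj s * ip g k"
proof -
  have sg: "(\<lambda>n. s * g n) \<in> l2" "(\<lambda>n. s * k n) \<in> l2" using assms by (auto intro: l2_scale)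
  have "ip (\<lambda>n. f n + s * g n) (\<lambda>n. h n + s * k n)
      = ip f (\<lambda>n. h n + s * k n) + s * ip g (\<lambda>n. h n + s * k n)"
    using ip_add1[OF assms(1) sg(1) l2_add[OF assms(3) sg(2)]] by (simp add: ip_scale1)
  also have "\<dots> = ip f h + cnj s * ip f k + s * (ip g h + cnj s * ip g k)"
    using ip_add2[OF assms(3) sg(2) assms(1)] ip_add2[OF assms(3) sg(2) assms(2)]
    by (simp add: ip_scale2)
  finally show ?thesis by (simp add: algebra_simps)
qed

lemma nrm_pos: assumes "u \<in> l2" "u m0 \<noteq> 0" shows "nrm u > 0"
proof -
  have "sum (\<lambda>n. (cmod (u n))^2) {m0} \<le> nrm u"
    unfolding nrm_def using assms(1) unfolding l2_def
    by (intro finite_sum_le_infsum) auto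
  hence "(cmod (u m0))^2 \<le> nrm u" by simp
  moreover have "(cmod (u m0))^2 > 0" using assms(2) by simp
  ultimately show ?thesis by linarith
qed

lemma normal_ev:
  assumes bd: "bounded (range d)" and u: "u \<in> l2" "u m0 \<noteq> 0"
    and ev: "jacobi d u = (\<lambda>n. z * u n)" and ni: "z \<notin> interior (numrange d)"
    and um: "u m \<noteq> 0"
  shows "Im (d m) = Im z"
proof -
  define N where "N = nrm u"
  have N0: "N > 0" unfolding N_def by (rule nrm_pos[OF u])
  have Ju: "jacobi d u \<in> l2" by (rule jacobi_l2[OF bd u(1)])
  have uu: "ip u u = of_real N" unfolding N_def by (rule ip_self[OF u(1)])
  have Juu: "ip (jacobi d u) u = z * of_real N" unfolding ev ip_scale1 uu ..
  define c0 where "c0 = - (cnj (u m) / of_real N)"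
  define w where "w = (\<lambda>n. ee m n + c0 * u n)"
  have w: "w \<in> l2" unfolding w_def by (intro l2_add l2_ee l2_scale u(1))
  have "ip w u = cnj (u m) + c0 * of_real N"
    unfolding w_def using ip_add1[OF l2_ee l2_scale[OF u(1)] u(1)]
    by (simp add: ip_scale1 ip_ee uu)
  hence wu: "ip w u = 0" using N0 by (simp add: c0_def)
  have uw: "ip u w = 0" using wu ip_conj[of u w] by simp
  have Jw: "jacobi d w = (\<lambda>n. jacobi d (ee m) n + c0 * jacobi d u n)"
    unfolding w_def jacobi_lin ..
  have Je: "jacobi d (ee m) \<in> l2" by (rule jacobi_l2[OF bd l2_ee])
  have Jwl: "jacobi d w \<in> l2" by (rule jacobi_l2[OF bd w])
  define a where "a = ip (jacobi d w) u"
  have Jeu: "ip (jacobi d (ee m)) u = cnj (u (m+1)) + d m * cnj (u m) + cnj (u (m-1))"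
  proof -
    have l1: "(\<lambda>n. ee (m+1) n + d m * ee m n) \<in> l2" by (intro l2_add l2_ee l2_scale)
    have "ip (jacobi d (ee m)) u = ip (\<lambda>n. ee (m+1) n + d m * ee m n) u + ip (ee (m-1)) u"
      unfolding jacobi_ee by (rule ip_add1[OF l1 l2_ee u(1)])
    also have "ip (\<lambda>n. ee (m+1) n + d m * ee m n) u = ip (ee (m+1)) u + d m * ip (ee m) u"
      using ip_add1[OF l2_ee l2_scale[OF l2_ee] u(1)] by (simp add: ip_scale1)
    finally show ?thesis by (simp add: ip_ee)
  qed
  have aval: "a = cnj (u (m+1)) + d m * cnj (u m) + cnj (u (m-1)) - cnj (u m) * z"
  proof -
    have "a = ip (jacobi d (ee m)) u + c0 * (z * of_real N)"
      unfolding a_def Jw using ip_add1[OF Je l2_scale[OF Ju] u(1)]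
      by (simp add: ip_scale1 Juu)
    thus ?thesis unfolding Jeu using N0 by (simp add: c0_def)
  qed
  have a0: "a = 0"
  proof (rule ccontr)
    assume an: "a \<noteq> 0"
    define C where "C = ip (jacobi d w) w"
    define P where "P = nrm w"
    have P0: "P \<ge> 0" unfolding P_def by (rule nrm_nonneg)
    have ww: "ip w w = of_real P" unfolding P_def by (rule ip_self[OF w])
    have Juw: "ip (jacobi d u) w = 0" unfolding ev ip_scale1 uw by simp
    have mem: "(z * of_real N + s * a + of_real ((cmod s)^2) * C) / of_real (N + (cmod s)^2 * P)
               \<in> numrange d" for s
    proof -
      define v where "v = (\<lambda>n. u n + s * w n)"
      have v: "v \<in> l2" unfolding v_def by (intro l2_add l2_scale u(1) w)
      have sc: "s * cnj s = of_real ((cmod s)^2)" by (rule complex_norm_square[symmetric])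
      have "ip v v = of_real N + of_real ((cmod s)^2) * of_real P"
        unfolding v_def ip_expand[OF u(1) w u(1) w] uu uw wu ww sc by simp
      hence nv: "nrm v = N + (cmod s)^2 * P" using ip_self[OF v]
        by (metis of_real_add of_real_mult of_real_eq_iff)
      have nvp: "nrm v > 0" unfolding nv using N0 P0 by (simp add: add_pos_nonneg)
      have "ip (jacobi d v) v = z * of_real N + s * a + of_real ((cmod s)^2) * C"
        unfolding v_def jacobi_lin ip_expand[OF Ju Jwl u(1) w] Juu Juw a_def[symmetric]
          C_def[symmetric] sc by simp
      thus ?thesis using in_numrange[OF v nvp, where d=d] unfolding nv by simp
    qed
    obtain r where r: "r > 0" "\<And>\<zeta>. cmod (\<zeta> - z) < r \<Longrightarrow> \<exists>s. \<zeta> * of_real (N + (cmod s)^2 * P)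
           = z * of_real N + s * a + of_real ((cmod s)^2) * C"
      using alg_open[OF N0 P0 an, of z C] by blast
    have "ball z r \<subseteq> numrange d"
    proof
      fix \<zeta> assume "\<zeta> \<in> ball z r"
      hence "cmod (\<zeta> - z) < r" by (simp add: dist_norm norm_minus_commute)
      then obtain s where s: "\<zeta> * of_real (N + (cmod s)^2 * P)
           = z * of_real N + s * a + of_real ((cmod s)^2) * C" using r(2) by blast
      have "N + (cmod s)^2 * P > 0" using N0 P0 by (simp add: add_pos_nonneg)
      hence "\<zeta> = (z * of_real N + s * a + of_real ((cmod s)^2) * C) / of_real (N + (cmod s)^2 * P)"
      proof -
        have nz: "(of_real (N + (cmod s)^2 * P) :: complex) \<noteq> 0"
          using \<open>N + (cmod s)^2 * P > 0\<close> of_real_eq_0_iff by (metis less_irrefl)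
        show ?thesis using s nz by (metis nonzero_mult_div_cancel_right)
      qed
      thus "\<zeta> \<in> numrange d" using mem by simp
    qed
    hence "z \<in> interior (numrange d)" using r(1) mem_interior by blast
    thus False using ni by simp
  qed
  have e1: "cnj (u (m+1)) + d m * cnj (u m) + cnj (u (m-1)) = cnj (u m) * z"
    using a0 aval by simp
  have e2: "u (m-1) + d m * u m + u (m+1) = z * u m"
    using fun_cong[OF ev, of m] unfolding jacobi_def .
  have f1: "u (m-1) + cnj (d m) * u m + u (m+1) = cnj z * u m"
    using arg_cong[OF e1, of cnj] by (simp add: algebra_simps)
  have "(d m - cnj (d m)) * u m = (u (m-1) + d m * u m + u (m+1)) - (u (m-1) + cnj (d m) * u m + u (m+1))"
    by (simp add: algebra_simps)
  also have "\<dots> = z * u m - cnj z * u m" by (simp only: e2 f1)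
  finally have "(d m - cnj (d m)) * u m = (z - cnj z) * u m" by (simp add: algebra_simps)
  hence "d m - cnj (d m) = z - cnj z" using um by simp
  hence "Im (d m - cnj (d m)) = Im (z - cnj z)" by simp
  thus ?thesis by simp
qed


lemma ev_eq: assumes "jacobi d u = (\<lambda>n. z * u n)"
  shows "u (n - 1) + d n * u n + u (n + 1) = z * u n"
  using fun_cong[OF assms, of n] unfolding jacobi_def .

lemma two_zeros:
  assumes ev: "jacobi d u = (\<lambda>n. z * u n)" and z1: "u m = 0" and z2: "u (m+1) = 0"
  shows "u n = 0"
proof -
  have up: "u (m + int k) = 0 \<and> u (m + int k + 1) = 0" for k
  proof (induction k)
    case 0 thus ?case using z1 z2 by simp
  next
    case (Suc k)
    have "u (m + int k + 1 - 1) + d (m + int k + 1) * u (m + int k + 1) + u (m + int k + 1 + 1)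
          = z * u (m + int k + 1)" by (rule ev_eq[OF ev])
    hence "u (m + int k + 1 + 1) = 0" using Suc by simp
    moreover have e1: "m + int (Suc k) = m + int k + 1" and e2: "m + int (Suc k) + 1 = m + int k + 1 + 1"
      by simp_all
    ultimately show ?case unfolding e1 e2 using Suc by blast
  qed
  have down: "u (m - int k) = 0 \<and> u (m - int k + 1) = 0" for k
  proof (induction k)
    case 0 thus ?case using z1 z2 by simp
  next
    case (Suc k)
    have "u (m - int k - 1) + d (m - int k) * u (m - int k) + u (m - int k + 1)
          = z * u (m - int k)" by (rule ev_eq[OF ev])
    hence "u (m - int k - 1) = 0" using Suc by simp
    thus ?case using Suc by (simp add: algebra_simps)
  qed
  show ?thesis
  proof (cases "n \<ge> m")
    case True
    hence "n = m + int (nat (n - m))" by simp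
    thus ?thesis using up by metis
  next
    case False
    hence "n = m - int (nat (m - n))" by simp
    thus ?thesis using down by metis
  qed
qed

lemma disjoint_supports:
  assumes u: "u \<in> l2" "u n0 \<noteq> 0" and evu: "jacobi d u = (\<lambda>n. z * u n)"
    and v: "v n1 \<noteq> 0" and evv: "jacobi d v = (\<lambda>n. \<mu> * v n)"
    and dis: "\<And>n. u n = 0 \<or> v n = 0"
  shows False
proof -
  have alt: "u n = 0 \<longleftrightarrow> u (n+1) \<noteq> 0" for n
  proof
    assume "u n = 0" thus "u (n+1) \<noteq> 0" using two_zeros[OF evu, of n n0] u(2) by blast
  next
    assume "u (n+1) \<noteq> 0"
    show "u n = 0"
    proof (rule ccontr)
      assume "u n \<noteq> 0"
      hence "v n = 0" "v (n+1) = 0" using dis \<open>u (n+1) \<noteq> 0\<close> by blast+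
      thus False using two_zeros[OF evv, of n n1] v by blast
    qed
  qed
  have step: "cmod (u (n + 2)) = cmod (u n)" for n
  proof (cases "u (n+1) = 0")
    case True
    have "u (n + 1 - 1) + d (n+1) * u (n+1) + u (n + 1 + 1) = z * u (n+1)" by (rule ev_eq[OF evu])
    hence "u (n+2) = - u n" using True by (simp add: add.assoc eq_neg_iff_add_eq_0 add.commute)
    thus ?thesis by simp
  next
    case False
    hence "u n = 0" using alt[of n] by simp
    moreover have "u (n+2) = 0" using alt[of "n+1"] False by (simp add: add.assoc)
    ultimately show ?thesis by simp
  qed
  have const: "cmod (u (n0 + 2 * int k)) = cmod (u n0)" for k
  proof (induction k)
    case 0 thus ?case by simp
  next
    case (Suc k)
    have "cmod (u (n0 + 2 * int k + 2)) = cmod (u (n0 + 2 * int k))" by (rule step)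
    thus ?case using Suc by (simp add: algebra_simps)
  qed
  have "(\<lambda>n. (cmod (u n))^2) summable_on UNIV" using u(1) unfolding l2_def by simp
  hence "(\<lambda>n. (cmod (u n))^2) summable_on range (\<lambda>k::nat. n0 + 2 * int k)"
    by (rule summable_on_subset_banach) simp
  hence "((\<lambda>n. (cmod (u n))^2) o (\<lambda>k::nat. n0 + 2 * int k)) summable_on UNIV"
    by (subst (asm) summable_on_reindex) (auto simp: inj_on_def)
  hence "(\<lambda>k::nat. (cmod (u n0))^2) summable_on UNIV" by (simp add: o_def const)
  hence "summable (\<lambda>k::nat. (cmod (u n0))^2)"
    by (subst (asm) summable_on_UNIV_nonneg_real_iff) auto
  hence "(cmod (u n0))^2 = 0" by (simp add: summable_const_iff)
  thus False using u(2) by simp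
qed


lemma bev_unpack:
  assumes "boundary_eigenvalue d z"
  obtains u n0 where "u \<in> l2" "u n0 \<noteq> 0" "jacobi d u = (\<lambda>n. z * u n)"
    "z \<notin> interior (numrange d)"
proof -
  from assms obtain u where u: "u \<in> l2" "u \<noteq> (\<lambda>_. 0)" "jacobi d u = (\<lambda>n. z * u n)"
    and f: "z \<in> frontier (numrange d)"
    unfolding boundary_eigenvalue_def is_eigenvalue_def by blast
  from u(2) obtain n0 where "u n0 \<noteq> 0" by auto
  moreover have "z \<notin> interior (numrange d)" using f unfolding frontier_def by blast
  ultimately show ?thesis using that u by blast
qed

theorem mainTheorem8:
  fixes d :: "int \<Rightarrow> complex" and z :: complex and b :: real
  assumes "bounded (range d)"
    and "boundary_eigenvalue d z"
    and "Im z = b"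
  shows "(\<forall>n. Im (d n) = b \<or> Im (d (n + 1)) = b)
       \<and> (\<forall>\<mu>. boundary_eigenvalue d \<mu> \<longrightarrow> Im \<mu> = b)"
proof -
  obtain u n0 where u: "u \<in> l2" "u n0 \<noteq> 0" "jacobi d u = (\<lambda>n. z * u n)"
    "z \<notin> interior (numrange d)" using bev_unpack[OF assms(2)] by blast
  have I: "Im (d n) = b \<or> Im (d (n + 1)) = b" for n
  proof (cases "u n = 0")
    case True
    hence "u (n+1) \<noteq> 0" using two_zeros[OF u(3), of n n0] u(2) by blast
    thus ?thesis using normal_ev[OF assms(1) u(1,2,3,4)] assms(3) by blast
  next
    case False
    thus ?thesis using normal_ev[OF assms(1) u(1,2,3,4)] assms(3) by blast
  qed
  have II: "Im \<mu> = b" if mu: "boundary_eigenvalue d \<mu>" for \<mu>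
  proof (rule ccontr)
    assume ne: "Im \<mu> \<noteq> b"
    obtain v n1 where v: "v \<in> l2" "v n1 \<noteq> 0" "jacobi d v = (\<lambda>n. \<mu> * v n)"
      "\<mu> \<notin> interior (numrange d)" using bev_unpack[OF mu] by blast
    have "u n = 0 \<or> v n = 0" for n
      using normal_ev[OF assms(1) u(1,2,3,4), of n] normal_ev[OF assms(1) v(1,2,3,4), of n]
        assms(3) ne by metis
    thus False using disjoint_supports[OF u(1,2,3) v(2,3)] by blast
  qed
  show ?thesis using I II by blast
qed

end
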